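(* Every celebrity game $\Gamma=\langle V,(w_u)_{u\in V},\alpha,\beta\rangle$ with $\beta>1$ has a Nash equilibrium. More precisely, with $n=|V|$ and $w_{\max}=\max_{u\in V}w_u$: if $\alpha\ge w_{\max}$ then the edgeless graph $I_n$ on $V$ is a Nash equilibrium graph of $\Gamma$; if $\alpha<w_{\max}$ then a star graph $S_n$ on $V$ (a tree in which one vertex is adjacent to all the others) is a Nash equilibrium graph of $\Gamma$, while $I_n$ is not.
   Context: A celebrity game $\Gamma=\langle V,(w_u)_{u\in V},\alpha,\beta\rangle$ consists of a set of players $V=\{1,\dots,n\}$, celebrity weights $w_u>0$, a link cost $\alpha>0$ and a critical distance $\beta$ with $1\le\beta\le n-1$. A strategy of player $u$ is a set $S_u\subseteq V\setminus\{u\}$; a strategy profile is $S=(S_1,\dots,S_n)$; its outcome graph $G[S]$ is the undirected graph on $V$ with edge set $\{\{u,v\}: u\in S_v\text{ or }v\in S_u\}$. With $d_G$ the graph distance (infinite between different connected components), the cost of player $u$ is $c_u(S)=\alpha|S_u|+\sum_{v:\,d_{G[S]}(u,v)>\beta}w_v$. $S$ is a Nash equilibrium if no player can strictly decrease its cost by changing only its own strategy; a graph $G$ is a Nash equilibrium graph of $\Gamma$ if $G=G[S]$ for some Nash equilibrium $S$. *)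

theory Defs
  imports Main "HOL-Library.Extended_Nat"
begin

text \<open>Players are V = {1..n}. A strategy profile is a function S :: nat => nat set.
  Undirected graphs on V are represented by their edge sets (sets of 2-element sets).\<close>

definition players :: "nat \<Rightarrow> nat set" where
  "players n = {1..n}"

definition valid_profile :: "nat \<Rightarrow> (nat \<Rightarrow> nat set) \<Rightarrow> bool" where
  "valid_profile n S \<longleftrightarrow> (\<forall>u \<in> players n. S u \<subseteq> players n - {u})"

definition outcome :: "nat \<Rightarrow> (nat \<Rightarrow> nat set) \<Rightarrow> nat set set" where
  "outcome n S = {{u, v} | u v. u \<in> players n \<and> v \<in> S u}"

definition adj :: "nat set set \<Rightarrow> (nat \<times> nat) set" where
  "adj G = {(u, v). {u, v} \<in> G \<and> u \<noteq> v}"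

text \<open>Graph distance (infinite between different components).\<close>
definition gdist :: "nat set set \<Rightarrow> nat \<Rightarrow> nat \<Rightarrow> enat" where
  "gdist G u v = Inf {enat k | k. (u, v) \<in> (adj G) ^^ k}"

definition cost :: "nat \<Rightarrow> (nat \<Rightarrow> real) \<Rightarrow> real \<Rightarrow> nat \<Rightarrow> (nat \<Rightarrow> nat set) \<Rightarrow> nat \<Rightarrow> real" where
  "cost n w \<alpha> \<beta> S u = \<alpha> * real (card (S u))
     + (\<Sum>v \<in> {v \<in> players n. gdist (outcome n S) u v > enat \<beta>}. w v)"

definition is_NE :: "nat \<Rightarrow> (nat \<Rightarrow> real) \<Rightarrow> real \<Rightarrow> nat \<Rightarrow> (nat \<Rightarrow> nat set) \<Rightarrow> bool" where
  "is_NE n w \<alpha> \<beta> S \<longleftrightarrow> valid_profile n S \<and>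
     (\<forall>u \<in> players n. \<forall>T. T \<subseteq> players n - {u} \<longrightarrow>
        cost n w \<alpha> \<beta> S u \<le> cost n w \<alpha> \<beta> (S(u := T)) u)"

definition is_NE_graph :: "nat \<Rightarrow> (nat \<Rightarrow> real) \<Rightarrow> real \<Rightarrow> nat \<Rightarrow> nat set set \<Rightarrow> bool" where
  "is_NE_graph n w \<alpha> \<beta> G \<longleftrightarrow> (\<exists>S. is_NE n w \<alpha> \<beta> S \<and> outcome n S = G)"

definition edgeless :: "nat set set" where
  "edgeless = {}"

definition star :: "nat \<Rightarrow> nat \<Rightarrow> nat set set" where
  "star n c = {{c, v} | v. v \<in> players n \<and> v \<noteq> c}"

end

theory Submission
  imports Defs
begin

lemma reach:
  assumes "u \<in> R" "\<And>x y. x \<in> R \<Longrightarrow> (x,y) \<in> adj G \<Longrightarrow> y \<in> R"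
    "(u,v) \<in> adj G ^^ k"
  shows "v \<in> R"
  using assms(3)
proof (induction k arbitrary: v)
  case 0 then show ?case using assms(1) by simp
next
  case (Suc k)
  then obtain y where "(u,y) \<in> adj G ^^ k" "(y,v) \<in> adj G" by auto
  then show ?case using Suc.IH assms(2) by blast
qed

lemma gdist_inf:
  assumes "\<And>k. (u,v) \<notin> adj G ^^ k"
  shows "gdist G u v = \<infinity>"
  using assms by (simp add: gdist_def top_enat_def[symmetric])

lemma gdist_le: "(u,v) \<in> adj G ^^ k \<Longrightarrow> gdist G u v \<le> enat k"
  unfolding gdist_def by (rule Inf_lower) auto

lemma gdist_far:
  assumes "u \<in> R" "\<And>x y. x \<in> R \<Longrightarrow> (x,y) \<in> adj G \<Longrightarrow> y \<in> R" "v \<notin> R"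
  shows "gdist G u v > enat b"
proof -
  have "gdist G u v = \<infinity>"
  proof (rule gdist_inf)
    fix k show "(u,v) \<notin> adj G ^^ k" using reach[of u R G v k] assms by blast
  qed
  then show ?thesis by simp
qed

lemma cost_lb:
  assumes "\<forall>v\<in>players n. w v \<ge> 0"
    "A \<subseteq> {v \<in> players n. gdist (outcome n S) u v > enat \<beta>}"
  shows "cost n w \<alpha> \<beta> S u \<ge> \<alpha> * card (S u) + sum w A"
proof -
  have "sum w A \<le> (\<Sum>v \<in> {v \<in> players n. gdist (outcome n S) u v > enat \<beta>}. w v)"
    by (rule sum_mono2) (use assms in \<open>auto simp: players_def\<close>)
  then show ?thesis unfolding cost_def by simp
qed

lemma cost_ub:
  assumes "\<forall>v\<in>players n. w v \<ge> 0"
    "{v \<in> players n. gdist (outcome n S) u v > enat \<beta>} \<subseteq> B" "B \<subseteq> players n"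
  shows "cost n w \<alpha> \<beta> S u \<le> \<alpha> * card (S u) + sum w B"
proof -
  have "sum w B \<ge> (\<Sum>v \<in> {v \<in> players n. gdist (outcome n S) u v > enat \<beta>}. w v)"
    by (rule sum_mono2) (use assms in \<open>auto simp: players_def intro: finite_subset\<close>)
  then show ?thesis unfolding cost_def by simp
qed

lemma adj_iff: "(x,y) \<in> adj G \<longleftrightarrow> {x,y} \<in> G \<and> x \<noteq> y"
  by (simp add: adj_def)

lemma doubleton_eq: "{a,b} = {c,d} \<longleftrightarrow> (a = c \<and> b = d) \<or> (a = d \<and> b = c)"
  by (auto simp: doubleton_eq_iff)

theorem proposition4:
  fixes n :: nat and w :: "nat \<Rightarrow> real" and \<alpha> :: real and \<beta> :: nat
  assumes "\<forall>u \<in> players n. w u > 0"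
    and "\<alpha> > 0"
    and "1 \<le> \<beta>" and "\<beta> \<le> n - 1"
    and "\<beta> > 1"
  shows "(\<exists>S. is_NE n w \<alpha> \<beta> S)
    \<and> (\<alpha> \<ge> Max (w ` players n) \<longrightarrow> is_NE_graph n w \<alpha> \<beta> edgeless)
    \<and> (\<alpha> < Max (w ` players n) \<longrightarrow>
          (\<exists>c \<in> players n. is_NE_graph n w \<alpha> \<beta> (star n c))
          \<and> \<not> is_NE_graph n w \<alpha> \<beta> edgeless)"
proof -
  have n3: "n \<ge> 3" using assms(4,5) by simp
  have fin: "finite (players n)" by (simp add: players_def)
  have ne: "players n \<noteq> {}" using n3 by (auto simp: players_def)
  have w0: "\<forall>v\<in>players n. w v \<ge> 0" using assms(1) by auto
  obtain m where m: "m \<in> players n" "w m = Max (w ` players n)"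
  proof -
    have "Max (w ` players n) \<in> w ` players n" using fin ne by (intro Max_in) auto
    then show ?thesis using that by auto
  qed
  have wle: "\<And>x. x \<in> players n \<Longrightarrow> w x \<le> w m"
    using m(2) fin by simp
  have E: "is_NE_graph n w \<alpha> \<beta> edgeless" if ge: "\<alpha> \<ge> Max (w ` players n)"
  proof -
    define S :: "nat \<Rightarrow> nat set" where "S = (\<lambda>_. {})"
    have out: "outcome n S = edgeless" by (simp add: outcome_def edgeless_def S_def)
    have "is_NE n w \<alpha> \<beta> S"
      unfolding is_NE_def
    proof (intro conjI ballI allI impI)
      show "valid_profile n S" by (simp add: valid_profile_def S_def)
    next
      fix u T assume u: "u \<in> players n" and T: "T \<subseteq> players n - {u}"
      have finT: "finite T" using T fin finite_subset by blast
      have c1: "cost n w \<alpha> \<beta> S u \<le> \<alpha> * card (S u) + sum w (players n - {u})"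
      proof (rule cost_ub[OF w0])
        show "{v \<in> players n. enat \<beta> < gdist (outcome n S) u v} \<subseteq> players n - {u}"
        proof
          fix v assume "v \<in> {v \<in> players n. enat \<beta> < gdist (outcome n S) u v}"
          then have v: "v \<in> players n" and far: "enat \<beta> < gdist (outcome n S) u v" by auto
          have "v \<noteq> u"
          proof
            assume "v = u"
            moreover have "gdist (outcome n S) u u \<le> enat 0" by (rule gdist_le) simp
            ultimately show False using far
              by (metis order.strict_trans2 enat_ord_simps(2) not_less0)
          qed
          then show "v \<in> players n - {u}" using v by simp
        qed
      qed auto
      have outT: "outcome n (S(u := T)) = {{u,v} | v. v \<in> T}"
        using u by (auto simp: outcome_def S_def)
      have c2: "cost n w \<alpha> \<beta> (S(u:=T)) u \<ge> \<alpha> * card ((S(u:=T)) u) + sum w (players n - {u} - T)"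
      proof (rule cost_lb[OF w0], rule subsetI, rule CollectI, rule conjI)
        fix v assume v: "v \<in> players n - {u} - T"
        then show "v \<in> players n" by simp
        show "enat \<beta> < gdist (outcome n (S(u := T))) u v"
          by (rule gdist_far[where R="insert u T"]) (use v in \<open>auto simp: outT adj_iff doubleton_eq\<close>)
      qed
      have split: "sum w (players n - {u}) = sum w T + sum w (players n - {u} - T)"
        using T fin by (metis Diff_partition finite_Diff sum.subset_diff add.commute)
      have "sum w T \<le> real (card T) * \<alpha>"
        using sum_bounded_above[of T w \<alpha>] T wle m(2) ge by fastforce
      then show "cost n w \<alpha> \<beta> S u \<le> cost n w \<alpha> \<beta> (S(u := T)) u"
        using c1 c2 split by (simp add: S_def algebra_simps)
    qed
    then show ?thesis using out unfolding is_NE_graph_def by blast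
  qed
  have St: "is_NE_graph n w \<alpha> \<beta> (star n m)" if lt: "\<alpha> < Max (w ` players n)"
  proof -
    define S :: "nat \<Rightarrow> nat set" where "S = (\<lambda>x. if x = m then {} else {m})"
    have out: "outcome n S = star n m"
      unfolding outcome_def star_def S_def by (auto simp: insert_commute)
    have nofar: "{v \<in> players n. enat \<beta> < gdist (outcome n S) u v} \<subseteq> {}"
      if u: "u \<in> players n" for u
    proof
      fix v assume "v \<in> {v \<in> players n. enat \<beta> < gdist (outcome n S) u v}"
      then have v: "v \<in> players n" and far: "enat \<beta> < gdist (outcome n S) u v" by auto
      have A: "\<And>x. x \<in> players n \<Longrightarrow> x \<noteq> m \<Longrightarrow> (x,m) \<in> adj (outcome n S) \<and> (m,x) \<in> adj (outcome n S)"
        by (auto simp: out star_def adj_iff insert_commute)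
      have "gdist (outcome n S) u v \<le> enat 2"
      proof (cases "u = v")
        case True
        then have "gdist (outcome n S) u v \<le> enat 0" by (intro gdist_le) simp
        then show ?thesis by (simp add: zero_enat_def[symmetric] order_trans)
      next
        case False
        show ?thesis
        proof (cases "u = m \<or> v = m")
          case True
          then have "(u,v) \<in> adj (outcome n S)" using A u v False by blast
          then have "gdist (outcome n S) u v \<le> enat 1" by (intro gdist_le) simp
          then show ?thesis by (simp add: one_enat_def[symmetric] order_trans)
        next
          case F: False
          have "(u,v) \<in> adj (outcome n S) ^^ 2"
            using A[OF u] A[OF v] F by (auto simp: numeral_2_eq_2 relcomp.simps)
          then show ?thesis by (rule gdist_le)
        qed
      qed
      then have "enat \<beta> < enat 2" using far order.strict_trans2 by blast
      then show "v \<in> {}" using assms(5) by simp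
    qed
    have "is_NE n w \<alpha> \<beta> S"
      unfolding is_NE_def
    proof (intro conjI ballI allI impI)
      show "valid_profile n S" using m(1) by (auto simp: valid_profile_def S_def)
    next
      fix u T assume u: "u \<in> players n" and T: "T \<subseteq> players n - {u}"
      have finT: "finite T" using T fin finite_subset by blast
      have c1: "cost n w \<alpha> \<beta> S u \<le> \<alpha> * card (S u) + sum w {}"
        by (rule cost_ub[OF w0 nofar[OF u]]) simp
      show "cost n w \<alpha> \<beta> S u \<le> cost n w \<alpha> \<beta> (S(u := T)) u"
      proof (cases "u = m")
        case True
        have "cost n w \<alpha> \<beta> (S(u:=T)) u \<ge> \<alpha> * card ((S(u:=T)) u) + sum w {}"
          by (rule cost_lb[OF w0]) simp
        moreover have "\<alpha> * real (card T) \<ge> 0" using assms(2) by simp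
        ultimately show ?thesis using c1 True by (simp add: S_def)
      next
        case False
        show ?thesis
        proof (cases "T = {}")
          case True
          have outT: "outcome n (S(u := T)) = {{x,m} | x. x \<in> players n \<and> x \<noteq> m \<and> x \<noteq> u}"
            using u True unfolding outcome_def S_def by (auto simp: insert_commute)
          have "cost n w \<alpha> \<beta> (S(u:=T)) u \<ge> \<alpha> * card ((S(u:=T)) u) + sum w {m}"
          proof (rule cost_lb[OF w0], rule subsetI, rule CollectI, rule conjI)
            fix x assume "x \<in> {m}"
            then have x: "x = m" by simp
            show "x \<in> players n" using x m(1) by simp
            show "enat \<beta> < gdist (outcome n (S(u := T))) u x"
              by (rule gdist_far[where R="{u}"]) (use False x in \<open>auto simp: outT adj_iff doubleton_eq\<close>)
          qed
          then show ?thesis using c1 True False lt m(2) by (simp add: S_def)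
        next
          case ne: False
          have "card T \<ge> 1" using ne finT by (simp add: Suc_le_eq card_gt_0_iff)
          moreover have "cost n w \<alpha> \<beta> (S(u:=T)) u \<ge> \<alpha> * card ((S(u:=T)) u) + sum w {}"
            by (rule cost_lb[OF w0]) simp
          moreover have "\<alpha> \<le> \<alpha> * real (card T)" using \<open>card T \<ge> 1\<close> assms(2) by simp
          ultimately show ?thesis using c1 False by (simp add: S_def)
        qed
      qed
    qed
    then show ?thesis using out unfolding is_NE_graph_def by blast
  qed
  have NE: "\<not> is_NE_graph n w \<alpha> \<beta> edgeless" if lt: "\<alpha> < Max (w ` players n)"
  proof
    assume "is_NE_graph n w \<alpha> \<beta> edgeless"
    then obtain S where S: "is_NE n w \<alpha> \<beta> S" "outcome n S = {}"
      by (auto simp: is_NE_graph_def edgeless_def)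
    have Se: "\<And>x. x \<in> players n \<Longrightarrow> S x = {}"
      using S(2) unfolding outcome_def by blast
    obtain u where u: "u \<in> players n" "u \<noteq> m"
    proof (cases "m = 1")
      case True then show ?thesis using that[of 2] n3 by (auto simp: players_def)
    next
      case False then show ?thesis using that[of 1] n3 by (auto simp: players_def)
    qed
    have c1: "cost n w \<alpha> \<beta> S u \<ge> \<alpha> * card (S u) + sum w (players n - {u})"
    proof (rule cost_lb[OF w0], rule subsetI, rule CollectI, rule conjI)
      fix v assume v: "v \<in> players n - {u}"
      then show "v \<in> players n" by simp
      show "enat \<beta> < gdist (outcome n S) u v"
        by (rule gdist_far[where R="{u}"]) (use v S(2) in \<open>auto simp: adj_iff\<close>)
    qed
    have outT: "outcome n (S(u := {m})) = {{u,m}}"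
      using u Se unfolding outcome_def by auto
    have c2: "cost n w \<alpha> \<beta> (S(u:={m})) u \<le> \<alpha> * card ((S(u:={m})) u) + sum w (players n - {u} - {m})"
    proof (rule cost_ub[OF w0])
      show "{v \<in> players n. enat \<beta> < gdist (outcome n (S(u := {m}))) u v} \<subseteq> players n - {u} - {m}"
      proof
        fix v assume "v \<in> {v \<in> players n. enat \<beta> < gdist (outcome n (S(u := {m}))) u v}"
        then have v: "v \<in> players n" and far: "enat \<beta> < gdist (outcome n (S(u := {m}))) u v" by auto
        have "\<not> gdist (outcome n (S(u := {m}))) u v \<le> enat 1"
          using far assms(5) by (metis enat_ord_simps(2) order.strict_trans2 less_le_not_le less_imp_le_nat less_trans not_less)
        moreover have "v = u \<or> v = m \<Longrightarrow> gdist (outcome n (S(u := {m}))) u v \<le> enat 1"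
        proof (cases "v = u")
          case True
          then have "gdist (outcome n (S(u := {m}))) u v \<le> enat 0" by (intro gdist_le) simp
          then show ?thesis by (simp add: zero_enat_def[symmetric] order_trans)
        next
          case False
          assume "v = u \<or> v = m"
          then have "v = m" using False by simp
          then have "(u,v) \<in> adj (outcome n (S(u := {m}))) ^^ 1"
            using u by (simp add: outT adj_iff)
          then show ?thesis by (rule gdist_le)
        qed
        ultimately show "v \<in> players n - {u} - {m}" using v by blast
      qed
    qed auto
    have split: "sum w (players n - {u}) = w m + sum w (players n - {u} - {m})"
      using u m(1) fin by (metis Diff_iff finite_Diff insertE sum.remove singletonD)
    have "cost n w \<alpha> \<beta> S u \<le> cost n w \<alpha> \<beta> (S(u := {m})) u"
      using S(1) u m(1) unfolding is_NE_def by auto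
    then show False using c1 c2 split lt m(2) Se[OF u(1)] by simp
  qed
  show ?thesis
  proof (cases "\<alpha> \<ge> Max (w ` players n)")
    case True then show ?thesis using E unfolding is_NE_graph_def by auto
  next
    case False
    then have "\<alpha> < Max (w ` players n)" by simp
    then show ?thesis using St NE m(1) unfolding is_NE_graph_def by auto
  qed
qed

end
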